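(* Let $(X,d)$ be a complete separable metric space and let $f\colon X\to X$ be a continuous map. If $\operatorname{diam}(X)=\sup_{x,y\in X}d(x,y)=\infty$ and $f$ is weakly mixing, then $f$ is densely uniformly Li-Yorke chaotic.
   Context: $f$ is weakly mixing if $f\times f\colon X\times X\to X\times X$ is transitive, i.e. for all nonempty open $U,V\subset X\times X$ there is $n\in\mathbb{N}$ with $U\cap (f\times f)^{-n}(V)\neq\emptyset$. A subset $S\subset X$ with at least two points is uniformly Li-Yorke scrambled for $f$ if there exist sequences $\{p_n\}$, $\{q_n\}$ in $\mathbb{N}$ such that for all distinct $x,y\in S$: $\lim_{n} d(f^{p_n}(x),f^{p_n}(y))=0$ and $\lim_{n} d(f^{q_n}(x),f^{q_n}(y))=\infty$. $f$ is densely uniformly Li-Yorke chaotic if there exists a dense, uncountable, uniformly Li-Yorke scrambled subset of $X$. *)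

theory Defs
  imports "HOL-Analysis.Analysis"
begin

definition topologically_transitive :: "('a::topological_space \<Rightarrow> 'a) \<Rightarrow> bool" where
  "topologically_transitive g \<longleftrightarrow>
     (\<forall>U V. open U \<and> open V \<and> U \<noteq> {} \<and> V \<noteq> {} \<longrightarrow>
        (\<exists>n::nat. n \<ge> 1 \<and> U \<inter> (g ^^ n) -` V \<noteq> {}))"

definition weakly_mixing :: "('a::topological_space \<Rightarrow> 'a) \<Rightarrow> bool" where
  "weakly_mixing f \<longleftrightarrow> topologically_transitive (\<lambda>(x, y). (f x, f y))"

definition uniformly_li_yorke_scrambled :: "('a::metric_space \<Rightarrow> 'a) \<Rightarrow> 'a set \<Rightarrow> bool" where
  "uniformly_li_yorke_scrambled f S \<longleftrightarrow>
     (\<exists>x\<in>S. \<exists>y\<in>S. x \<noteq> y) \<and>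
     (\<exists>p q :: nat \<Rightarrow> nat. \<forall>x\<in>S. \<forall>y\<in>S. x \<noteq> y \<longrightarrow>
        ((\<lambda>n. dist ((f ^^ p n) x) ((f ^^ p n) y)) \<longlonglongrightarrow> 0) \<and>
        filterlim (\<lambda>n. dist ((f ^^ q n) x) ((f ^^ q n) y)) at_top sequentially)"

definition densely_uniformly_li_yorke_chaotic :: "('a::metric_space \<Rightarrow> 'a) \<Rightarrow> bool" where
  "densely_uniformly_li_yorke_chaotic f \<longleftrightarrow>
     (\<exists>S. closure S = UNIV \<and> uncountable S \<and> uniformly_li_yorke_scrambled f S)"

end

theory Submission
  imports Defs
begin

lemma funpow_prod: "((\<lambda>(x, y). (f x, f y)) ^^ n) (x, y) = (((f::'a\<Rightarrow>'a) ^^ n) x, (f ^^ n) y)"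
  by (induction n) simp_all

lemma cont_funpow: "continuous_on UNIV (f::'a::topological_space\<Rightarrow>'a) \<Longrightarrow> continuous_on UNIV (f ^^ n)"
proof (induction n)
  case 0 then show ?case by (simp add: continuous_on_id)
next
  case (Suc n)
  then have "continuous_on UNIV (f \<circ> (f ^^ n))"
    by (intro continuous_on_compose) (auto intro: continuous_on_subset)
  then show ?case by simp
qed

lemma open_funpow_vimage:
  assumes "continuous_on UNIV (f::'a::topological_space\<Rightarrow>'a)" "open V"
  shows "open ((f ^^ n) -` V)"
  using continuous_open_preimage[OF cont_funpow[OF assms(1)] open_UNIV assms(2)] by simp

definition NN :: "('a \<Rightarrow> 'a) \<Rightarrow> 'a set \<Rightarrow> 'a set \<Rightarrow> nat set" where
  "NN f U V = {n. n \<ge> 1 \<and> U \<inter> (f ^^ n) -` V \<noteq> {}}"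

lemma wm_D:
  assumes "weakly_mixing f" "open U" "open V" "U \<noteq> {}" "V \<noteq> {}"
  shows "\<exists>n::nat. n \<ge> 1 \<and> U \<inter> ((\<lambda>(x, y). (f x, f y)) ^^ n) -` V \<noteq> {}"
proof -
  have "topologically_transitive (\<lambda>(x, y). (f x, f y))" using assms(1) unfolding weakly_mixing_def .
  then have H: "\<forall>U V. open U \<and> open V \<and> U \<noteq> {} \<and> V \<noteq> {} \<longrightarrow>
        (\<exists>n::nat. n \<ge> 1 \<and> U \<inter> ((\<lambda>(x, y). (f x, f y)) ^^ n) -` V \<noteq> {})"
    unfolding topologically_transitive_def .
  have "open U \<and> open V \<and> U \<noteq> {} \<and> V \<noteq> {}" using assms(2-5) by simp
  then show ?thesis by (rule H[THEN spec[of _ U], THEN spec[of _ V], THEN mp])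
qed
lemma furstenberg:
  fixes f :: "'a::topological_space \<Rightarrow> 'a"
  assumes c: "continuous_on UNIV f" and wm: "weakly_mixing f"
    and o: "open U1" "open V1" "open U2" "open V2"
    and ne: "U1 \<noteq> {}" "V1 \<noteq> {}" "U2 \<noteq> {}" "V2 \<noteq> {}"
  shows "\<exists>U3 V3. open U3 \<and> open V3 \<and> U3 \<noteq> {} \<and> V3 \<noteq> {} \<and>
           NN f U3 V3 \<subseteq> NN f U1 V1 \<inter> NN f U2 V2"
proof -
  have o1: "open (U1 \<times> V1)" and o2: "open (U2 \<times> V2)" using o by (auto intro: open_Times)
  have n1: "U1 \<times> V1 \<noteq> {}" and n2: "U2 \<times> V2 \<noteq> {}" using ne by auto
  obtain n where n: "n \<ge> 1"
    "(U1 \<times> V1) \<inter> ((\<lambda>(x, y). (f x, f y)) ^^ n) -` (U2 \<times> V2) \<noteq> {}"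
    using wm_D[OF wm o1 o2 n1 n2] by blast
  then obtain x y where xy: "x \<in> U1" "y \<in> V1" "(f ^^ n) x \<in> U2" "(f ^^ n) y \<in> V2"
    by (auto simp: funpow_prod)
  define U3 where "U3 = U1 \<inter> (f ^^ n) -` U2"
  define V3 where "V3 = V1 \<inter> (f ^^ n) -` V2"
  have "open U3" "open V3" unfolding U3_def V3_def
    using o open_funpow_vimage[OF c] by auto
  moreover have "U3 \<noteq> {}" "V3 \<noteq> {}" using xy unfolding U3_def V3_def by auto
  moreover have "NN f U3 V3 \<subseteq> NN f U1 V1 \<inter> NN f U2 V2"
  proof
    fix m assume "m \<in> NN f U3 V3"
    then obtain z where z: "m \<ge> 1" "z \<in> U3" "(f ^^ m) z \<in> V3" unfolding NN_def by auto
    have "(f ^^ m) ((f ^^ n) z) = (f ^^ n) ((f ^^ m) z)"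
    proof -
      have "(f ^^ m) ((f ^^ n) z) = (f ^^ (m + n)) z" by (simp add: funpow_add)
      also have "\<dots> = (f ^^ (n + m)) z" by (simp add: add.commute)
      also have "\<dots> = (f ^^ n) ((f ^^ m) z)" by (simp add: funpow_add)
      finally show ?thesis .
    qed
    then show "m \<in> NN f U1 V1 \<inter> NN f U2 V2"
      using z unfolding NN_def U3_def V3_def by auto
  qed
  ultimately show ?thesis by blast
qed

lemma multi_trans:
  fixes f :: "'a::topological_space \<Rightarrow> 'a"
  assumes c: "continuous_on UNIV f" and wm: "weakly_mixing f" and fin: "finite A"
    and h: "\<forall>a\<in>A. open (U a) \<and> U a \<noteq> {} \<and> open (V a) \<and> V a \<noteq> {}"
  shows "\<exists>n\<ge>1. \<forall>a\<in>A. U a \<inter> (f ^^ n) -` V a \<noteq> {}"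
proof -
  have "\<exists>U0 V0. open U0 \<and> open V0 \<and> U0 \<noteq> {} \<and> V0 \<noteq> {} \<and> (\<forall>a\<in>A. NN f U0 V0 \<subseteq> NN f (U a) (V a))"
    using fin h
  proof (induction A rule: finite_induct)
    case empty
    then show ?case by (intro exI[of _ UNIV]) auto
  next
    case (insert b A)
    then obtain U0 V0 where UV: "open U0" "open V0" "U0 \<noteq> {}" "V0 \<noteq> {}"
      "\<forall>a\<in>A. NN f U0 V0 \<subseteq> NN f (U a) (V a)" by auto
    from furstenberg[OF c wm UV(1,2) _ _ UV(3,4), of "U b" "V b"] insert.prems
    obtain U3 V3 where "open U3 \<and> open V3 \<and> U3 \<noteq> {} \<and> V3 \<noteq> {} \<and>
           NN f U3 V3 \<subseteq> NN f U0 V0 \<inter> NN f (U b) (V b)" by auto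
    then show ?case using UV(5) by (intro exI[of _ U3] exI[of _ V3]) auto
  qed
  then obtain U0 V0 where UV: "open U0" "open V0" "U0 \<noteq> {}" "V0 \<noteq> {}"
      "\<forall>a\<in>A. NN f U0 V0 \<subseteq> NN f (U a) (V a)" by auto
  have o1: "open (U0 \<times> U0)" and o2: "open (V0 \<times> V0)" using UV by (auto intro: open_Times)
  have n1: "U0 \<times> U0 \<noteq> {}" and n2: "V0 \<times> V0 \<noteq> {}" using UV by auto
  obtain n where n: "n \<ge> 1"
    "(U0 \<times> U0) \<inter> ((\<lambda>(x, y). (f x, f y)) ^^ n) -` (V0 \<times> V0) \<noteq> {}"
    using wm_D[OF wm o1 o2 n1 n2] by blast
  then have n0: "n \<in> NN f U0 V0" unfolding NN_def by (auto simp: funpow_prod)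
  have "U a \<inter> (f ^^ n) -` V a \<noteq> {}" if "a \<in> A" for a
  proof -
    have "n \<in> NN f (U a) (V a)" using UV(5) that n0 by (meson subsetD)
    then show ?thesis unfolding NN_def by simp
  qed
  then show ?thesis using n(1) by blast
qed

lemma far_points:
  fixes R :: real
  assumes "\<not> bounded (UNIV :: 'a::metric_space set)" "finite A"
  shows "\<exists>z::'b \<Rightarrow> 'a. \<forall>a\<in>A. \<forall>b\<in>A. a \<noteq> b \<longrightarrow> dist (z a) (z b) \<ge> R"
  using assms(2)
proof (induction A rule: finite_induct)
  case empty then show ?case by auto
next
  case (insert a A)
  then obtain z :: "'b \<Rightarrow> 'a" where z: "\<forall>a\<in>A. \<forall>b\<in>A. a \<noteq> b \<longrightarrow> dist (z a) (z b) \<ge> R" by auto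
  obtain c :: 'a where True by auto
  define M where "M = Max (insert 0 ((\<lambda>b. dist c (z b)) ` A))"
  have M: "\<And>b. b \<in> A \<Longrightarrow> dist c (z b) \<le> M" unfolding M_def using insert(1) by auto
  have "\<not> (\<forall>y. dist c y \<le> M + R)" using assms(1) bounded_any_center[of UNIV c] by auto
  then obtain w where w: "dist c w > M + R" by (auto simp: not_le)
  have "dist w (z b) \<ge> R" if "b \<in> A" for b
    using M[OF that] w dist_triangle[of c w "z b"] by (simp add: dist_commute)
  then show ?case using z insert(2)
    by (intro exI[of _ "z(a := w)"]) (auto simp: dist_commute)
qed

definition NS :: "nat \<Rightarrow> (nat \<times> bool list) set" where
  "NS k = {(j, w). j < k \<and> length w = k}"

lemma finite_NS: "finite (NS k)"
proof -
  have "NS k \<subseteq> {..<k} \<times> {w. set w \<subseteq> UNIV \<and> length w = k}" unfolding NS_def by auto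
  moreover have "finite ({..<k} \<times> {w::bool list. set w \<subseteq> UNIV \<and> length w = k})"
    by (intro finite_cartesian_product finite_lists_length_eq) auto
  ultimately show ?thesis by (rule finite_subset)
qed

definition WW :: "(nat \<Rightarrow> 'a set) \<Rightarrow> nat \<Rightarrow> (nat \<times> bool list \<Rightarrow> 'a set) \<Rightarrow> nat \<times> bool list \<Rightarrow> 'a set" where
  "WW B k V a = (if fst a < k then V (fst a, butlast (snd a)) else B k)"

definition good_step :: "('a::metric_space \<Rightarrow> 'a) \<Rightarrow> (nat \<Rightarrow> 'a set) \<Rightarrow> 'a \<Rightarrow> nat \<Rightarrow>
   (nat \<times> bool list \<Rightarrow> 'a set) \<Rightarrow> (nat \<times> bool list \<Rightarrow> 'a set) \<Rightarrow> nat \<Rightarrow> nat \<Rightarrow> bool" where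
  "good_step f B z0 k V V' p q \<longleftrightarrow>
    (\<forall>a\<in>NS (Suc k). open (V' a) \<and> V' a \<noteq> {} \<and> (\<exists>c. closure (V' a) \<subseteq> cball c (1 / real (Suc k))) \<and>
        closure (V' a) \<subseteq> WW B k V a \<and> (\<forall>x\<in>closure (V' a). dist ((f ^^ p) x) z0 < 1 / real (Suc k))) \<and>
    (\<forall>a\<in>NS (Suc k). \<forall>b\<in>NS (Suc k). a \<noteq> b \<longrightarrow>
        (\<forall>x\<in>closure (V' a). \<forall>y\<in>closure (V' b). dist ((f ^^ q) x) ((f ^^ q) y) \<ge> real k))"

lemma step:
  fixes f :: "'a::metric_space \<Rightarrow> 'a"
  assumes c: "continuous_on UNIV f" and wm: "weakly_mixing f" and ub: "\<not> bounded (UNIV :: 'a set)"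
    and hB: "\<forall>j. open (B j) \<and> B j \<noteq> {}"
    and hV: "\<forall>a\<in>NS k. open (V a) \<and> V a \<noteq> {}"
  shows "\<exists>V' p q. good_step f B z0 k V V' p q"
proof -
  define A where "A = NS (Suc k)"
  have finA: "finite A" unfolding A_def by (rule finite_NS)
  define W where "W = WW B k V"
  define r where "r = 1 / real (Suc k)"
  have r: "r > 0" unfolding r_def by simp
  have hW: "\<forall>a\<in>A. open (W a) \<and> W a \<noteq> {}"
  proof
    fix a assume "a \<in> A"
    then obtain j w where a: "a = (j, w)" "j < Suc k" "length w = Suc k" unfolding A_def NS_def by auto
    show "open (W a) \<and> W a \<noteq> {}"
    proof (cases "j < k")
      case True
      then have "(j, butlast w) \<in> NS k" using a unfolding NS_def by auto
      then show ?thesis using hV True a unfolding W_def WW_def by auto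
    next
      case False
      then show ?thesis using hB a unfolding W_def WW_def by auto
    qed
  qed
  obtain p where p: "p \<ge> 1" "\<forall>a\<in>A. W a \<inter> (f ^^ p) -` ball z0 r \<noteq> {}"
    using multi_trans[OF c wm finA, of W "\<lambda>_. ball z0 r"] hW r by auto
  define W1 where "W1 a = W a \<inter> (f ^^ p) -` ball z0 r" for a
  have hW1: "\<forall>a\<in>A. open (W1 a) \<and> W1 a \<noteq> {}"
    using hW p(2) open_funpow_vimage[OF c] unfolding W1_def by auto
  obtain z :: "nat \<times> bool list \<Rightarrow> 'a" where z: "\<forall>a\<in>A. \<forall>b\<in>A. a \<noteq> b \<longrightarrow> dist (z a) (z b) \<ge> real k + 2"
    using far_points[OF ub finA] by blast
  obtain q where q: "q \<ge> 1" "\<forall>a\<in>A. W1 a \<inter> (f ^^ q) -` ball (z a) 1 \<noteq> {}"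
    using multi_trans[OF c wm finA, of W1 "\<lambda>a. ball (z a) 1"] hW1 by auto
  define W2 where "W2 a = W1 a \<inter> (f ^^ q) -` ball (z a) 1" for a
  have hW2: "\<forall>a\<in>A. open (W2 a) \<and> W2 a \<noteq> {}"
    using hW1 q(2) open_funpow_vimage[OF c] unfolding W2_def by auto
  have "\<forall>a\<in>A. \<exists>cr. snd cr > 0 \<and> snd cr \<le> r \<and> cball (fst cr) (snd cr) \<subseteq> W2 a"
  proof
    fix a assume "a \<in> A"
    then obtain x where x: "x \<in> W2 a" and o: "open (W2 a)" using hW2 by auto
    then obtain e where e: "e > 0" "cball x e \<subseteq> W2 a" using open_contains_cball by blast
    have "cball x (min e r) \<subseteq> W2 a" using e by auto
    then show "\<exists>cr. snd cr > 0 \<and> snd cr \<le> r \<and> cball (fst cr) (snd cr) \<subseteq> W2 a"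
      using e r by (intro exI[of _ "(x, min e r)"]) auto
  qed
  then obtain CR where CR: "\<forall>a\<in>A. snd (CR a) > 0 \<and> snd (CR a) \<le> r \<and> cball (fst (CR a)) (snd (CR a)) \<subseteq> W2 a"
    by metis
  define V' where "V' a = ball (fst (CR a)) (snd (CR a))" for a
  have clV: "closure (V' a) \<subseteq> cball (fst (CR a)) (snd (CR a))" for a
    unfolding V'_def by (intro closure_minimal ball_subset_cball closed_cball)
  have sub: "closure (V' a) \<subseteq> W2 a" if "a \<in> A" for a using clV[of a] CR that by blast
  have P1: "\<forall>a\<in>A. open (V' a) \<and> V' a \<noteq> {} \<and> (\<exists>c. closure (V' a) \<subseteq> cball c (1 / real (Suc k))) \<and>
        closure (V' a) \<subseteq> WW B k V a \<and> (\<forall>x\<in>closure (V' a). dist ((f ^^ p) x) z0 < 1 / real (Suc k))"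
  proof
    fix a assume a: "a \<in> A"
    have "cball (fst (CR a)) (snd (CR a)) \<subseteq> cball (fst (CR a)) (1 / real (Suc k))"
      using CR a unfolding r_def by auto
    then have "\<exists>c. closure (V' a) \<subseteq> cball c (1 / real (Suc k))" using clV by blast
    moreover have "open (V' a) \<and> V' a \<noteq> {}" using CR a unfolding V'_def by auto
    moreover have "closure (V' a) \<subseteq> WW B k V a" using sub[OF a] unfolding W2_def W1_def W_def by auto
    moreover have "\<forall>x\<in>closure (V' a). dist ((f ^^ p) x) z0 < 1 / real (Suc k)"
      using sub[OF a] unfolding W2_def W1_def r_def by (auto simp: dist_commute)
    ultimately show "open (V' a) \<and> V' a \<noteq> {} \<and> (\<exists>c. closure (V' a) \<subseteq> cball c (1 / real (Suc k))) \<and>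
        closure (V' a) \<subseteq> WW B k V a \<and> (\<forall>x\<in>closure (V' a). dist ((f ^^ p) x) z0 < 1 / real (Suc k))"
      by blast
  qed
  have P2: "\<forall>a\<in>A. \<forall>b\<in>A. a \<noteq> b \<longrightarrow>
        (\<forall>x\<in>closure (V' a). \<forall>y\<in>closure (V' b). dist ((f ^^ q) x) ((f ^^ q) y) \<ge> real k)"
  proof (intro ballI impI)
    fix a b x y assume ab: "a \<in> A" "b \<in> A" "a \<noteq> b" and xy: "x \<in> closure (V' a)" "y \<in> closure (V' b)"
    have "x \<in> W2 a" "y \<in> W2 b" using sub[OF ab(1)] sub[OF ab(2)] xy by auto
    then have d1: "dist (z a) ((f ^^ q) x) < 1" and d2: "dist (z b) ((f ^^ q) y) < 1" unfolding W2_def by auto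
    have "dist (z a) (z b) \<le> dist (z a) ((f ^^ q) x) + dist ((f ^^ q) x) ((f ^^ q) y) + dist ((f ^^ q) y) (z b)"
      using dist_triangle[of "z a" "z b" "(f ^^ q) x"] dist_triangle[of "(f ^^ q) x" "z b" "(f ^^ q) y"]
      by linarith
    moreover have "dist (z a) (z b) \<ge> real k + 2" using z ab by auto
    ultimately show "dist ((f ^^ q) x) ((f ^^ q) y) \<ge> real k" using d1 d2 by (simp add: dist_commute)
  qed
  show ?thesis unfolding good_step_def using P1 P2 unfolding A_def by blast
qed

lemma uncountable_bool_seq: "uncountable (UNIV :: (nat \<Rightarrow> bool) set)"
proof
  assume "countable (UNIV :: (nat \<Rightarrow> bool) set)"
  then obtain g :: "nat \<Rightarrow> (nat \<Rightarrow> bool)" where "surj g"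
    by (metis UNIV_not_empty uncountable_def)
  then obtain n where "g n = (\<lambda>m. \<not> g m m)" by (metis surjD)
  then have "g n n = (\<not> g n n)" by (metis)
  then show False by simp
qed

lemma basis_seq:
  "\<exists>B :: nat \<Rightarrow> 'a::{second_countable_topology, metric_space} set.
     (\<forall>j. open (B j) \<and> B j \<noteq> {}) \<and> (\<forall>U. open U \<and> U \<noteq> {} \<longrightarrow> (\<exists>j. B j \<subseteq> U))"
proof -
  obtain \<B> :: "'a set set" where cB: "countable \<B>" and tB: "topological_basis \<B>"
    using ex_countable_basis by blast
  define \<B>' where "\<B>' = \<B> - {{}}"
  have c': "countable \<B>'" using cB unfolding \<B>'_def by auto
  have cover: "\<exists>b\<in>\<B>'. b \<subseteq> U" if Uo: "open U" and Une: "U \<noteq> {}" for U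
  proof -
    have "\<forall>x. open x \<longrightarrow> (\<exists>B'\<subseteq>\<B>. \<Union>B' = x)" using tB unfolding topological_basis_def by (rule conjunct2)
    then have "\<exists>B'\<subseteq>\<B>. \<Union>B' = U" using Uo by simp
    then obtain B' where B': "B' \<subseteq> \<B>" "\<Union>B' = U" by (elim exE conjE)
    obtain u where "u \<in> U" using Une by blast
    then obtain b where "b \<in> B'" "u \<in> b" using B'(2) by blast
    then have "b \<in> \<B>'" "b \<subseteq> U" using B' unfolding \<B>'_def by auto
    then show ?thesis by blast
  qed
  have ne: "\<B>' \<noteq> {}" using cover[of UNIV] by auto
  define B where "B = from_nat_into \<B>'"
  have "\<forall>j. open (B j) \<and> B j \<noteq> {}"
  proof
    fix j
    have "B j \<in> \<B>'" unfolding B_def by (rule from_nat_into[OF ne])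
    then have "B j \<in> \<B>" "B j \<noteq> {}" unfolding \<B>'_def by auto
    moreover have "\<forall>b\<in>\<B>. open b" using tB unfolding topological_basis_def by (rule conjunct1)
    ultimately show "open (B j) \<and> B j \<noteq> {}" by blast
  qed
  moreover have "\<forall>U. open U \<and> U \<noteq> {} \<longrightarrow> (\<exists>j. B j \<subseteq> U)"
  proof (intro allI impI)
    fix U :: "'a set" assume "open U \<and> U \<noteq> {}"
    then obtain b where b: "b \<in> \<B>'" "b \<subseteq> U" using cover by blast
    obtain n where "from_nat_into \<B>' n = b" using from_nat_into_surj[OF c' b(1)] by blast
    then show "\<exists>j. B j \<subseteq> U" using b unfolding B_def by blast
  qed
  ultimately show ?thesis by blast
qed

theorem proposition2p7:
  fixes f :: "'a::polish_space \<Rightarrow> 'a"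
  assumes "continuous_on UNIV f"
    and "\<not> bounded (UNIV :: 'a set)"
    and "weakly_mixing f"
  shows "densely_uniformly_li_yorke_chaotic f"
proof -
  note c = assms(1) and ub = assms(2) and wm = assms(3)
  obtain B :: "nat \<Rightarrow> 'a set" where hB: "\<forall>j. open (B j) \<and> B j \<noteq> {}"
    and Bcov: "\<forall>U. open U \<and> U \<noteq> {} \<longrightarrow> (\<exists>j. B j \<subseteq> U)"
    using basis_seq by blast
  obtain z0 :: 'a where True by auto
  define hyp where "hyp k V \<longleftrightarrow> (\<forall>a\<in>NS k. open (V a) \<and> V a \<noteq> {})" for k and V :: "nat \<times> bool list \<Rightarrow> 'a set"
  define F where "F k V = (SOME t. hyp k V \<longrightarrow> good_step f B z0 k V (fst t) (fst (snd t)) (snd (snd t)))"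
    for k V
  have F: "good_step f B z0 k V (fst (F k V)) (fst (snd (F k V))) (snd (snd (F k V)))"
    if h: "hyp k V" for k V
  proof -
    have "\<forall>a\<in>NS k. open (V a) \<and> V a \<noteq> {}" using h unfolding hyp_def .
    then obtain V' p q where "good_step f B z0 k V V' p q" using step[OF c wm ub hB] by blast
    then have "\<exists>t. hyp k V \<longrightarrow> good_step f B z0 k V (fst t) (fst (snd t)) (snd (snd t))"
      by (intro exI[of _ "(V', p, q)"]) simp
    from someI_ex[OF this] h show ?thesis unfolding F_def by blast
  qed
  define Vs where "Vs = rec_nat (\<lambda>_. {}) (\<lambda>k V. fst (F k V))"
  have Vs_Suc: "Vs (Suc k) = fst (F k (Vs k))" for k unfolding Vs_def by simp
  define pp where "pp k = fst (snd (F k (Vs k)))" for k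
  define qq where "qq k = snd (snd (F k (Vs k)))" for k
  have H: "hyp k (Vs k)" for k
  proof (induction k)
    case 0 then show ?case unfolding hyp_def NS_def by auto
  next
    case (Suc k)
    then show ?case using F[OF Suc] unfolding hyp_def good_step_def Vs_Suc by blast
  qed
  have GS: "good_step f B z0 k (Vs k) (Vs (Suc k)) (pp k) (qq k)" for k
    using F[OF H[of k]] unfolding Vs_Suc pp_def qq_def .
  define word where "word \<sigma> k = map \<sigma> [0..<k]" for \<sigma> :: "nat \<Rightarrow> bool" and k
  have node: "(j, word \<sigma> (Suc k)) \<in> NS (Suc k)" if "j \<le> k" for j k \<sigma>
    using that unfolding NS_def word_def by auto
  define T where "T j \<sigma> n = closure (Vs (Suc (j + n)) (j, word \<sigma> (Suc (j + n))))" for j \<sigma> n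
  have ex_pt: "\<exists>a. \<forall>n. a \<in> T j \<sigma> n" for j \<sigma>
  proof -
    have props: "open (Vs (Suc (j + n)) (j, word \<sigma> (Suc (j + n)))) \<and> Vs (Suc (j + n)) (j, word \<sigma> (Suc (j + n))) \<noteq> {}
       \<and> (\<exists>c. T j \<sigma> n \<subseteq> cball c (1 / real (Suc (j + n))))
       \<and> T j \<sigma> n \<subseteq> WW B (j + n) (Vs (j + n)) (j, word \<sigma> (Suc (j + n)))" for n
      using GS[of "j + n"] node[of j "j + n" \<sigma>] unfolding good_step_def T_def by auto
    have dec: "T j \<sigma> (Suc n) \<subseteq> T j \<sigma> n" for n
    proof -
      have "T j \<sigma> (Suc n) \<subseteq> WW B (j + Suc n) (Vs (j + Suc n)) (j, word \<sigma> (Suc (j + Suc n)))"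
        using props[of "Suc n"] by blast
      also have "\<dots> = Vs (Suc (j + n)) (j, word \<sigma> (Suc (j + n)))"
        unfolding WW_def word_def by (simp add: butlast_append)
      also have "\<dots> \<subseteq> T j \<sigma> n" unfolding T_def by (rule closure_subset)
      finally show ?thesis .
    qed
    have "decseq (T j \<sigma>)" by (rule decseq_SucI) (use dec in auto)
    then have mono: "\<And>m n. m \<le> n \<Longrightarrow> T j \<sigma> n \<subseteq> T j \<sigma> m" unfolding decseq_def by blast
    show ?thesis
    proof (rule decreasing_closed_nest[of "T j \<sigma>"])
      show "closed (T j \<sigma> n)" for n unfolding T_def by simp
      show "T j \<sigma> n \<noteq> {}" for n using props[of n] closure_subset unfolding T_def by blast
      show "T j \<sigma> n \<subseteq> T j \<sigma> m" if "m \<le> n" for m n using mono that .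
      show "\<exists>n. \<forall>x\<in>T j \<sigma> n. \<forall>y\<in>T j \<sigma> n. dist x y < e" if e: "e > 0" for e
      proof -
        obtain n where n: "inverse (real (Suc n)) < e / 2" using reals_Archimedean e by (metis half_gt_zero)
        obtain c where cc: "T j \<sigma> n \<subseteq> cball c (1 / real (Suc (j + n)))" using props[of n] by blast
        have le: "1 / real (Suc (j + n)) \<le> inverse (real (Suc n))"
          by (simp add: divide_simps)
        have "dist x y < e" if "x \<in> T j \<sigma> n" "y \<in> T j \<sigma> n" for x y
        proof -
          have "dist c x \<le> 1 / real (Suc (j + n))" "dist c y \<le> 1 / real (Suc (j + n))" using cc that by auto
          then have "dist x y \<le> 2 / real (Suc (j + n))" using dist_triangle[of x y c] by (simp add: dist_commute)
          then show ?thesis using le n by linarith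
        qed
        then show ?thesis by blast
      qed
    qed auto
  qed
  define pt where "pt j \<sigma> = (SOME a. \<forall>n. a \<in> T j \<sigma> n)" for j \<sigma>
  have pt_in: "pt j \<sigma> \<in> closure (Vs (Suc k) (j, word \<sigma> (Suc k)))" if "j \<le> k" for j \<sigma> k
  proof -
    have "\<forall>n. pt j \<sigma> \<in> T j \<sigma> n" unfolding pt_def using someI_ex[OF ex_pt] by blast
    then have "pt j \<sigma> \<in> T j \<sigma> (k - j)" by blast
    then show ?thesis using that unfolding T_def by simp
  qed
  have pt_B: "pt j \<sigma> \<in> B j" for j \<sigma>
  proof -
    have "closure (Vs (Suc j) (j, word \<sigma> (Suc j))) \<subseteq> WW B j (Vs j) (j, word \<sigma> (Suc j))"
      using GS[of j] node[of j j \<sigma>] unfolding good_step_def by blast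
    then show ?thesis using pt_in[of j j \<sigma>] unfolding WW_def by auto
  qed
  have pt_p: "dist ((f ^^ pp k) (pt j \<sigma>)) z0 < 1 / real (Suc k)" if "j \<le> k" for j \<sigma> k
    using pt_in[OF that, of \<sigma>] GS[of k] node[OF that, of \<sigma>] unfolding good_step_def by blast
  have pt_q: "dist ((f ^^ qq k) (pt j \<sigma>)) ((f ^^ qq k) (pt j' \<sigma>')) \<ge> real k"
    if "j \<le> k" "j' \<le> k" "(j, word \<sigma> (Suc k)) \<noteq> (j', word \<sigma>' (Suc k))" for j j' \<sigma> \<sigma>' k
    using pt_in[OF that(1), of \<sigma>] pt_in[OF that(2), of \<sigma>'] GS[of k] node[OF that(1), of \<sigma>]
      node[OF that(2), of \<sigma>'] that(3) unfolding good_step_def by blast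
  have wdiff: "word \<sigma> (Suc k) \<noteq> word \<sigma>' (Suc k)" if "\<sigma> i \<noteq> \<sigma>' i" "i \<le> k" for \<sigma> \<sigma>' i k
  proof
    assume "word \<sigma> (Suc k) = word \<sigma>' (Suc k)"
    then have "word \<sigma> (Suc k) ! i = word \<sigma>' (Suc k) ! i" by simp
    then show False using that unfolding word_def by (simp del: upt_Suc)
  qed
  define S where "S = range (\<lambda>(j, \<sigma>). pt j \<sigma>)"
  have dense: "closure S = UNIV"
  proof -
    have "x \<in> closure S" for x
      unfolding closure_approachable
    proof (intro allI impI)
      fix e :: real assume "e > 0"
      then have "open (ball x e)" "ball x e \<noteq> {}" by auto
      then obtain j where "B j \<subseteq> ball x e" using Bcov by blast
      then have "pt j (\<lambda>_. False) \<in> ball x e" using pt_B by blast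
      moreover have "pt j (\<lambda>_. False) \<in> S" unfolding S_def by force
      ultimately show "\<exists>y\<in>S. dist y x < e" by (auto simp: dist_commute)
    qed
    then show ?thesis by auto
  qed
  have inj: "inj (pt 0)"
  proof
    fix \<sigma> \<sigma>' assume eq: "pt 0 \<sigma> = pt 0 \<sigma>'"
    show "\<sigma> = \<sigma>'"
    proof (rule ccontr)
      assume "\<sigma> \<noteq> \<sigma>'"
      then obtain i where i: "\<sigma> i \<noteq> \<sigma>' i" by auto
      have "dist ((f ^^ qq (Suc i)) (pt 0 \<sigma>)) ((f ^^ qq (Suc i)) (pt 0 \<sigma>')) \<ge> real (Suc i)"
        using pt_q[of 0 "Suc i" 0 \<sigma> \<sigma>'] wdiff[where \<sigma>=\<sigma> and \<sigma>'=\<sigma>' and i=i and k="Suc i"] i by auto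
      then show False using eq by simp
    qed
  qed
  have unc: "uncountable S"
  proof
    assume "countable S"
    moreover have "range (pt 0) \<subseteq> S" unfolding S_def by force
    ultimately have "countable (range (pt 0))" by (rule countable_subset[rotated])
    then have "countable (UNIV :: (nat \<Rightarrow> bool) set)" using countable_image_inj_on inj by blast
    then show False using uncountable_bool_seq by blast
  qed
  have two: "\<exists>x\<in>S. \<exists>y\<in>S. x \<noteq> y"
  proof (rule ccontr)
    assume "\<not> ?thesis"
    then have "S \<subseteq> {pt 0 (\<lambda>_. False)}" unfolding S_def by force
    then have "countable S" by (rule countable_subset) simp
    then show False using unc by blast
  qed
  have lim: "((\<lambda>n. dist ((f ^^ pp n) x) ((f ^^ pp n) y)) \<longlonglongrightarrow> 0) \<and>
        filterlim (\<lambda>n. dist ((f ^^ qq n) x) ((f ^^ qq n) y)) at_top sequentially"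
    if xy: "x \<in> S" "y \<in> S" "x \<noteq> y" for x y
  proof -
    obtain j \<sigma> j' \<sigma>' where x: "x = pt j \<sigma>" and y: "y = pt j' \<sigma>'" using xy unfolding S_def by auto
    have ev1: "eventually (\<lambda>k. norm (dist ((f ^^ pp k) x) ((f ^^ pp k) y)) \<le> 2 * inverse (real (Suc k))) sequentially"
      unfolding eventually_sequentially
    proof (intro exI allI impI)
      fix k assume "max j j' \<le> k"
      then have "dist ((f ^^ pp k) x) z0 < 1 / real (Suc k)" "dist ((f ^^ pp k) y) z0 < 1 / real (Suc k)"
        using pt_p x y by auto
      then show "norm (dist ((f ^^ pp k) x) ((f ^^ pp k) y)) \<le> 2 * inverse (real (Suc k))"
        using dist_triangle[of "(f ^^ pp k) x" "(f ^^ pp k) y" z0] by (simp add: dist_commute divide_inverse)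
    qed
    have "(\<lambda>k. 2 * inverse (real (Suc k))) \<longlonglongrightarrow> 0"
      using tendsto_mult_right_zero[OF LIMSEQ_inverse_real_of_nat] by simp
    then have L1: "(\<lambda>n. dist ((f ^^ pp n) x) ((f ^^ pp n) y)) \<longlonglongrightarrow> 0"
      using Lim_null_comparison[OF ev1] by blast
    obtain i where i: "j \<noteq> j' \<or> \<sigma> i \<noteq> \<sigma>' i"
    proof (cases "j = j'")
      case True
      then have "\<sigma> \<noteq> \<sigma>'" using xy x y by blast
      then show ?thesis using that by (auto simp: fun_eq_iff)
    next
      case False then show ?thesis using that by blast
    qed
    have ev2: "eventually (\<lambda>k. real k \<le> dist ((f ^^ qq k) x) ((f ^^ qq k) y)) sequentially"
      unfolding eventually_sequentially
    proof (intro exI allI impI)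
      fix k assume k: "max (max j j') i \<le> k"
      then have "(j, word \<sigma> (Suc k)) \<noteq> (j', word \<sigma>' (Suc k))" using i wdiff by auto
      then show "real k \<le> dist ((f ^^ qq k) x) ((f ^^ qq k) y)" using pt_q k x y by auto
    qed
    have L2: "filterlim (\<lambda>n. dist ((f ^^ qq n) x) ((f ^^ qq n) y)) at_top sequentially"
      by (rule filterlim_at_top_mono[OF filterlim_real_sequentially ev2])
    show ?thesis using L1 L2 by blast
  qed
  show ?thesis
    unfolding densely_uniformly_li_yorke_chaotic_def uniformly_li_yorke_scrambled_def
    using dense unc two lim by blast
qed

end
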